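(* Let $k,\ell,n,p,s\in\mathbb{N}$, $W\subset\mathbb{R}^n$, and let $H:\mathbb{R}_{\ge0}\times\mathbb{R}^p\to\mathbb{R}^{s\times n}$ and $A:\mathbb{R}_{\ge0}\times\mathbb{R}^\ell\times\mathbb{R}^k\times\mathbb{R}^p\to\mathbb{R}^{n\times n}$ be continuous. Let $t\mapsto Q(t)\subset\mathbb{R}^\ell$ ($t\ge0$) be a set-valued map with $Q(t)\ne\emptyset$ for all $t$, satisfying the CP. For each $t_0\ge0$ let $\Omega(t_0,W)$ be a nonempty set of continuous functions $(u,y):[t_0,\infty)\to\mathbb{R}^p\times\mathbb{R}^k$ parameterized by $t_0$ and $x_0\in W$. Let $t_0\ge0$, $\tau>0$, $b>a\ge t_0+\tau$ with $b-a<\tau$, and $(u,y)\in\Omega(t_0,W)$. Assume there exist a symmetric positive definite $P\in C^1([a,b];\mathbb{R}^{n\times n})$ and $d\in C^0([a,b];\mathbb{R})$, both strongly causal on $[a,b]$ with respect to $\Omega(t_0,W)$, such that \[ e'P(t)A(t-\tau,q,y_\tau(t),u_\tau(t))e+\tfrac12e'\dot P(t)e\le-d(t)e'P(t)e\quad\forall t\in[a,b],\ e\in\ker H(t-\tau,u_\tau(t)),\ q\in Q(t-\tau), \] and $\operatorname{rank}H(t-\tau,u_\tau(t))<n$ for all $t\in[a,b]$. Then for every $\bar d\in C^0([a,b];\mathbb{R})$, strongly causal on $[a,b]$ with respect to $\Omega(t_0,W)$, with $\bar d(t)<d(t)$ for all $t\in[a,b]$, there exists $\phi\in C^1([a,b];\mathbb{R}_{>0})$,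 strongly causal on $[a,b]$ with respect to $\Omega(t_0,W)$, such that \[ e'P(t)A(t-\tau,q,y_\tau(t),u_\tau(t))e+\tfrac12e'\dot P(t)e\le\phi(t)|H(t-\tau,u_\tau(t))e|^2-\bar d(t)e'P(t)e\quad\forall t\in[a,b],\ e\in\mathbb{R}^n,\ q\in Q(t-\tau). \]
   Context: $g_\tau(t):=g(t-\tau)$ denotes the $\tau$-time shift. A set-valued map $t\mapsto Q(t)$ satisfies the Compactness Property (CP) if whenever $t_\nu\to t$ and $q_\nu\in Q(t_\nu)$, some subsequence $q_{\nu_k}$ converges to some $q\in Q(t)$. A map $t\mapsto a_{u,y}(t)$ defined for $(u,y)\in\Omega(t_0,W)$ and $t\in I$ is strongly causal on $I\cap[\alpha,\beta]$ ($\beta>\alpha\ge t_0$) with respect to $\Omega(t_0,W)$ if for every $t\in I\cap[\alpha,\beta]$ the value $a_{u,y}(t)$ depends only on the restriction $(u,y)|_{[t_0,\alpha)}$. *)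

theory Defs
  imports "HOL-Analysis.Analysis"
begin

definition CP :: "(real \<Rightarrow> 'a::metric_space set) \<Rightarrow> bool" where
  "CP Q \<longleftrightarrow> (\<forall>(tt::nat \<Rightarrow> real) t (qq::nat \<Rightarrow> 'a).
      t \<ge> 0 \<and> (\<forall>i. tt i \<ge> 0) \<and> tt \<longlonglongrightarrow> t \<and> (\<forall>i. qq i \<in> Q (tt i)) \<longrightarrow>
      (\<exists>r q. strict_mono r \<and> q \<in> Q t \<and> (qq \<circ> r) \<longlonglongrightarrow> q))"

definition strongly_causal ::
  "((real \<Rightarrow> 'p) \<times> (real \<Rightarrow> 'k)) set \<Rightarrow> real \<Rightarrow> real \<Rightarrow> real \<Rightarrow>
   ((real \<Rightarrow> 'p) \<times> (real \<Rightarrow> 'k) \<Rightarrow> real \<Rightarrow> 'b) \<Rightarrow> bool" where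
  "strongly_causal Om t0 \<alpha> \<beta> f \<longleftrightarrow>
     (\<forall>uy1\<in>Om. \<forall>uy2\<in>Om.
        (\<forall>s\<in>{t0..<\<alpha>}. fst uy1 s = fst uy2 s \<and> snd uy1 s = snd uy2 s) \<longrightarrow>
        (\<forall>t\<in>{\<alpha>..\<beta>}. f uy1 t = f uy2 t))"

text \<open>C^1 on a compact interval (one-sided derivatives at the endpoints).\<close>
definition C1_on :: "real \<Rightarrow> real \<Rightarrow> (real \<Rightarrow> 'a::real_normed_vector) \<Rightarrow> bool" where
  "C1_on a b f \<longleftrightarrow> (\<forall>t\<in>{a..b}. f differentiable (at t within {a..b})) \<and>
     continuous_on {a..b} (\<lambda>t. vector_derivative f (at t within {a..b}))"

definition sym_pos_def_mat :: "real^'n^'n \<Rightarrow> bool" where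
  "sym_pos_def_mat M \<longleftrightarrow> transpose M = M \<and> (\<forall>e. e \<noteq> 0 \<longrightarrow> e \<bullet> (M *v e) > 0)"

end

theory Submission
  imports Defs
begin

lemma tendsto_mvm:
  fixes f :: "'a \<Rightarrow> real^'n^'m"
  assumes "(f \<longlongrightarrow> M) F" "(g \<longlongrightarrow> x) F"
  shows "((\<lambda>n. f n *v g n) \<longlongrightarrow> M *v x) F"
  unfolding matrix_vector_mult_def
  by (intro tendsto_vec_lambda tendsto_sum tendsto_mult tendsto_vec_nth assms)

lemma seq_cont:
  assumes "continuous_on S f" "a \<in> S" "\<And>n. x n \<in> S" "x \<longlonglongrightarrow> a"
  shows "(\<lambda>n. f (x n)) \<longlonglongrightarrow> f a"
  by (rule continuous_on_tendsto_compose[OF assms(1,4,2)]) (simp add: assms(3))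

lemma C1_const: "a < b \<Longrightarrow> C1_on a b (\<lambda>_. (c::real))"
proof -
  assume ab: "a < b"
  have eq: "0 = vector_derivative (\<lambda>_. c) (at t within {a..b})" if "t \<in> {a..b}" for t
    using vector_derivative_within_cbox[of a b t "\<lambda>_. c" 0] ab that
    by (simp add: has_vector_derivative_const)
  have "continuous_on {a..b} (\<lambda>t. vector_derivative (\<lambda>_. c) (at t within {a..b}))"
    by (rule continuous_on_eq[OF continuous_on_const eq])
  then show ?thesis unfolding C1_on_def by simp
qed

theorem lemma3p4:
  fixes H :: "real \<Rightarrow> real^'p \<Rightarrow> real^'n^'s"
    and A :: "real \<Rightarrow> real^'l \<Rightarrow> real^'k \<Rightarrow> real^'p \<Rightarrow> real^'n^'n"
    and Q :: "real \<Rightarrow> (real^'l) set"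
    and Om :: "((real \<Rightarrow> real^'p) \<times> (real \<Rightarrow> real^'k)) set"
    and t0 \<tau> a b :: real
    and u :: "real \<Rightarrow> real^'p" and y :: "real \<Rightarrow> real^'k"
    and P :: "(real \<Rightarrow> real^'p) \<times> (real \<Rightarrow> real^'k) \<Rightarrow> real \<Rightarrow> real^'n^'n"
    and d :: "(real \<Rightarrow> real^'p) \<times> (real \<Rightarrow> real^'k) \<Rightarrow> real \<Rightarrow> real"
  assumes H_cont: "continuous_on ({0..} \<times> UNIV) (\<lambda>(t, v). H t v)"
    and A_cont: "continuous_on ({0..} \<times> UNIV \<times> UNIV \<times> UNIV) (\<lambda>(t, q, w, v). A t q w v)"
    and Q_ne: "\<And>t. t \<ge> 0 \<Longrightarrow> Q t \<noteq> {}"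
    and Q_CP: "CP Q"
    and Om_ne: "Om \<noteq> {}"
    and Om_cont: "\<And>u' y'. (u', y') \<in> Om \<Longrightarrow> continuous_on {t0..} u' \<and> continuous_on {t0..} y'"
    and t0: "t0 \<ge> 0" and tau: "\<tau> > 0"
    and ab: "a \<ge> t0 + \<tau>" "b > a" "b - a < \<tau>"
    and uy: "(u, y) \<in> Om"
    and P_C1: "\<And>uy'. uy' \<in> Om \<Longrightarrow> C1_on a b (P uy')"
    and P_spd: "\<And>uy' t. uy' \<in> Om \<Longrightarrow> t \<in> {a..b} \<Longrightarrow> sym_pos_def_mat (P uy' t)"
    and P_causal: "strongly_causal Om t0 a b P"
    and d_cont: "\<And>uy'. uy' \<in> Om \<Longrightarrow> continuous_on {a..b} (d uy')"
    and d_causal: "strongly_causal Om t0 a b d"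
    and ineq: "\<And>t e q. t \<in> {a..b} \<Longrightarrow> H (t - \<tau>) (u (t - \<tau>)) *v e = 0 \<Longrightarrow> q \<in> Q (t - \<tau>) \<Longrightarrow>
        e \<bullet> (P (u, y) t *v (A (t - \<tau>) q (y (t - \<tau>)) (u (t - \<tau>)) *v e))
        + 1/2 * (e \<bullet> (vector_derivative (P (u, y)) (at t within {a..b}) *v e))
        \<le> - d (u, y) t * (e \<bullet> (P (u, y) t *v e))"
    and rank_H: "\<And>t. t \<in> {a..b} \<Longrightarrow> rank (H (t - \<tau>) (u (t - \<tau>))) < CARD('n)"
  shows "\<forall>dbar :: (real \<Rightarrow> real^'p) \<times> (real \<Rightarrow> real^'k) \<Rightarrow> real \<Rightarrow> real.
     (\<forall>uy'\<in>Om. continuous_on {a..b} (dbar uy')) \<and> strongly_causal Om t0 a b dbar \<and>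
     (\<forall>uy'\<in>Om. \<forall>t\<in>{a..b}. dbar uy' t < d uy' t) \<longrightarrow>
     (\<exists>\<phi> :: (real \<Rightarrow> real^'p) \<times> (real \<Rightarrow> real^'k) \<Rightarrow> real \<Rightarrow> real.
        (\<forall>uy'\<in>Om. C1_on a b (\<phi> uy') \<and> (\<forall>t\<in>{a..b}. \<phi> uy' t > 0)) \<and>
        strongly_causal Om t0 a b \<phi> \<and>
        (\<forall>t\<in>{a..b}. \<forall>e. \<forall>q\<in>Q (t - \<tau>).
          e \<bullet> (P (u, y) t *v (A (t - \<tau>) q (y (t - \<tau>)) (u (t - \<tau>)) *v e))
          + 1/2 * (e \<bullet> (vector_derivative (P (u, y)) (at t within {a..b}) *v e))
          \<le> \<phi> (u, y) t * (norm (H (t - \<tau>) (u (t - \<tau>)) *v e))^2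
             - dbar (u, y) t * (e \<bullet> (P (u, y) t *v e))))"
  proof (intro allI impI)
  fix dbar :: "(real \<Rightarrow> real^'p) \<times> (real \<Rightarrow> real^'k) \<Rightarrow> real \<Rightarrow> real"
  assume hd: "(\<forall>uy'\<in>Om. continuous_on {a..b} (dbar uy')) \<and> strongly_causal Om t0 a b dbar \<and>
     (\<forall>uy'\<in>Om. \<forall>t\<in>{a..b}. dbar uy' t < d uy' t)"
  have dbar_cont: "continuous_on {a..b} (dbar (u,y))" and dbar_lt: "\<And>t. t\<in>{a..b} \<Longrightarrow> dbar (u,y) t < d (u,y) t"
    using hd uy by auto
  define Pu where "Pu = P (u,y)"
  define DP where "DP = (\<lambda>t. vector_derivative Pu (at t within {a..b}))"
  define Hm where "Hm = (\<lambda>t. H (t-\<tau>) (u (t-\<tau>)))"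
  define Am where "Am = (\<lambda>t q. A (t - \<tau>) q (y (t - \<tau>)) (u (t - \<tau>)))"
  define L where "L = (\<lambda>t q e. e \<bullet> (Pu t *v (Am t q *v e)) + 1/2 * (e \<bullet> (DP t *v e)))"
  define R where "R = (\<lambda>t e. dbar (u,y) t * (e \<bullet> (Pu t *v e)))"
  have PC1: "C1_on a b Pu" using P_C1 uy Pu_def by simp
  have Pu_cont: "continuous_on {a..b} Pu"
    using PC1 unfolding C1_on_def
    by (meson continuous_on_eq_continuous_within differentiable_imp_continuous_within)
  have DP_cont: "continuous_on {a..b} DP" using PC1 unfolding C1_on_def DP_def by simp
  have u_cont: "continuous_on {t0..} u" and y_cont: "continuous_on {t0..} y" using Om_cont uy by auto
  have key: "\<exists>C>0. \<forall>t\<in>{a..b}. \<forall>e. norm e = 1 \<longrightarrow> (\<forall>q\<in>Q(t-\<tau>). L t q e + R t e \<le> C * (norm (Hm t *v e))^2)"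
  proof (rule ccontr)
    assume "\<not> ?thesis"
    then have "\<forall>n::nat. \<exists>t e q. t\<in>{a..b} \<and> norm e = 1 \<and> q \<in> Q(t-\<tau>) \<and>
        L t q e + R t e > real (Suc n) * (norm (Hm t *v e))^2"
      by (metis not_le of_nat_0_less_iff zero_less_Suc)
    then obtain tt ee qq where seq: "\<And>n. tt n \<in>{a..b} \<and> norm (ee n) = 1 \<and> qq n \<in> Q(tt n - \<tau>) \<and>
        L (tt n) (qq n) (ee n) + R (tt n) (ee n) > real (Suc n) * (norm (Hm (tt n) *v ee n))^2"
      by metis
    have "compact ({a..b} \<times> sphere (0::real^'n) 1)" by (intro compact_Times compact_sphere compact_Icc)
    moreover have "\<forall>n. (tt n, ee n) \<in> {a..b} \<times> sphere (0::real^'n) 1" using seq by simp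
    ultimately obtain te r1 where te: "te \<in> {a..b} \<times> sphere 0 1" and r1: "strict_mono r1"
        and lim1: "((\<lambda>n. (tt n, ee n)) \<circ> r1) \<longlonglongrightarrow> te"
      unfolding compact_def by meson
    obtain t e where tedef: "te = (t,e)" by fastforce
    have t: "t \<in> {a..b}" and e: "norm e = 1" using te tedef by auto
    have tlim: "(\<lambda>n. tt (r1 n)) \<longlonglongrightarrow> t" using tendsto_fst[OF lim1] tedef by (simp add: o_def)
    have elim: "(\<lambda>n. ee (r1 n)) \<longlonglongrightarrow> e" using tendsto_snd[OF lim1] tedef by (simp add: o_def)
    have tpos: "\<And>s. s \<in> {a..b} \<Longrightarrow> s - \<tau> \<ge> t0" using ab by auto
    have "t - \<tau> \<ge> 0" using tpos[OF t] t0 by linarith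
    moreover have "\<forall>i. tt (r1 i) - \<tau> \<ge> 0"
    proof
      fix i have "tt (r1 i) - \<tau> \<ge> t0" using tpos seq by blast
      then show "tt (r1 i) - \<tau> \<ge> 0" using t0 by linarith
    qed
    moreover have "(\<lambda>i. tt (r1 i) - \<tau>) \<longlonglongrightarrow> t - \<tau>" by (intro tendsto_diff tlim tendsto_const)
    moreover have "\<forall>i. (qq \<circ> r1) i \<in> Q (tt (r1 i) - \<tau>)" using seq by simp
    ultimately obtain r2 q where r2: "strict_mono r2" and q: "q \<in> Q (t - \<tau>)"
        and qlim0: "((qq \<circ> r1) \<circ> r2) \<longlonglongrightarrow> q"
      using Q_CP[unfolded CP_def, rule_format, of "t - \<tau>" "\<lambda>i. tt (r1 i) - \<tau>" "qq \<circ> r1"] by blast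
    define r where "r = r1 \<circ> r2"
    have r: "strict_mono r" unfolding r_def using r1 r2 by (rule strict_mono_o)
    define T where "T = tt \<circ> r"
    define E where "E = ee \<circ> r"
    define QQ where "QQ = qq \<circ> r"
    have Tlim: "T \<longlonglongrightarrow> t" unfolding T_def r_def
      using LIMSEQ_subseq_LIMSEQ[OF tlim r2] by (simp add: o_def)
    have Elim: "E \<longlonglongrightarrow> e" unfolding E_def r_def
      using LIMSEQ_subseq_LIMSEQ[OF elim r2] by (simp add: o_def)
    have Qlim: "QQ \<longlonglongrightarrow> q" unfolding QQ_def r_def using qlim0 by (simp add: o_assoc)
    have Tin: "\<And>n. T n \<in> {a..b}" unfolding T_def using seq by simp
    have PT: "(\<lambda>n. Pu (T n)) \<longlonglongrightarrow> Pu t"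
      by (rule seq_cont[OF Pu_cont t Tin Tlim])
    have DPT: "(\<lambda>n. DP (T n)) \<longlonglongrightarrow> DP t"
      by (rule seq_cont[OF DP_cont t Tin Tlim])
    have Tsh: "(\<lambda>n. T n - \<tau>) \<longlonglongrightarrow> t - \<tau>" by (intro tendsto_diff Tlim tendsto_const)
    have Tshin: "\<And>n. T n - \<tau> \<in> {t0..}" using tpos Tin by auto
    have tsh: "t - \<tau> \<in> {t0..}" using tpos t by auto
    have uT: "(\<lambda>n. u (T n - \<tau>)) \<longlonglongrightarrow> u (t - \<tau>)"
      by (rule seq_cont[OF u_cont tsh Tshin Tsh])
    have yT: "(\<lambda>n. y (T n - \<tau>)) \<longlonglongrightarrow> y (t - \<tau>)"
      by (rule seq_cont[OF y_cont tsh Tshin Tsh])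
    have t00: "\<And>s. s \<in> {t0..} \<Longrightarrow> s \<ge> 0" using t0 by auto
    have AT: "(\<lambda>n. Am (T n) (QQ n)) \<longlonglongrightarrow> Am t q"
    proof -
      define X where "X = (\<lambda>n. (T n - \<tau>, QQ n, y (T n - \<tau>), u (T n - \<tau>)))"
      have Xl: "X \<longlonglongrightarrow> (t - \<tau>, q, y (t - \<tau>), u (t - \<tau>))"
        unfolding X_def by (intro tendsto_Pair Tsh Qlim uT yT)
      have Xi: "\<And>n. X n \<in> {0..} \<times> UNIV \<times> UNIV \<times> UNIV"
      proof -
        fix n have "t0 \<le> T n - \<tau>" using Tshin[of n] by simp
        then show "X n \<in> {0..} \<times> UNIV \<times> UNIV \<times> UNIV" using t0 unfolding X_def by simp
      qed
      have Xa: "(t - \<tau>, q, y (t - \<tau>), u (t - \<tau>)) \<in> ({0::real..} \<times> UNIV \<times> UNIV \<times> UNIV)" using tsh t0 by auto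
      have "(\<lambda>n. (\<lambda>(t, q, w, v). A t q w v) (X n)) \<longlonglongrightarrow> (\<lambda>(t, q, w, v). A t q w v) (t - \<tau>, q, y (t - \<tau>), u (t - \<tau>))"
        by (rule seq_cont[OF A_cont Xa Xi Xl])
      then show ?thesis unfolding X_def Am_def by (simp add: o_def)
    qed
    have HT: "(\<lambda>n. Hm (T n)) \<longlonglongrightarrow> Hm t"
    proof -
      define X where "X = (\<lambda>n. (T n - \<tau>, u (T n - \<tau>)))"
      have Xl: "X \<longlonglongrightarrow> (t - \<tau>, u (t - \<tau>))"
        unfolding X_def by (intro tendsto_Pair Tsh uT)
      have Xi: "\<And>n. X n \<in> {0..} \<times> UNIV"
      proof -
        fix n have "t0 \<le> T n - \<tau>" using Tshin[of n] by simp
        then show "X n \<in> {0..} \<times> UNIV" using t0 unfolding X_def by simp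
      qed
      have Xa: "(t - \<tau>, u (t - \<tau>)) \<in> ({0::real..} \<times> UNIV)" using tsh t0 by auto
      have "(\<lambda>n. (\<lambda>(t, v). H t v) (X n)) \<longlonglongrightarrow> (\<lambda>(t, v). H t v) (t - \<tau>, u (t - \<tau>))"
        by (rule seq_cont[OF H_cont Xa Xi Xl])
      then show ?thesis unfolding X_def Hm_def by (simp add: o_def)
    qed
    have dT: "(\<lambda>n. dbar (u,y) (T n)) \<longlonglongrightarrow> dbar (u,y) t"
      by (rule seq_cont[OF dbar_cont t Tin Tlim])
    define f where "f = (\<lambda>n. L (T n) (QQ n) (E n) + R (T n) (E n))"
    define N where "N = (\<lambda>n. (norm (Hm (T n) *v E n))^2)"
    have flim: "f \<longlonglongrightarrow> L t q e + R t e" unfolding f_def L_def R_def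
      by (intro tendsto_add tendsto_mult tendsto_inner tendsto_mvm tendsto_const PT DPT AT Elim dT)
    have Nlim: "N \<longlonglongrightarrow> (norm (Hm t *v e))^2" unfolding N_def
      by (intro tendsto_power tendsto_norm tendsto_mvm HT Elim)
    have fN: "\<And>n. real (Suc (r n)) * N n < f n" unfolding f_def N_def T_def E_def QQ_def
      using seq by simp
    have invlim: "(\<lambda>n. inverse (real (Suc (r n)))) \<longlonglongrightarrow> 0"
      using LIMSEQ_subseq_LIMSEQ[OF LIMSEQ_inverse_real_of_nat r] by (simp add: o_def)
    have "(\<lambda>n. f n * inverse (real (Suc (r n)))) \<longlonglongrightarrow> (L t q e + R t e) * 0"
      by (intro tendsto_mult flim invlim)
    moreover have "\<And>n. N n \<le> f n * inverse (real (Suc (r n)))"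
    proof -
      fix n
      have "real (Suc (r n)) * N n \<le> f n" using fN[of n] by simp
      then show "N n \<le> f n * inverse (real (Suc (r n)))"
        by (simp add: field_simps)
    qed
    ultimately have "(norm (Hm t *v e))^2 \<le> 0"
      using LIMSEQ_le[OF Nlim] by fastforce
    then have Hz: "Hm t *v e = 0" by simp
    have "\<And>n. 0 \<le> f n" using fN by (smt (verit) N_def of_nat_0_le_iff zero_le_mult_iff zero_le_power2)
    then have l0: "0 \<le> L t q e + R t e" using LIMSEQ_le_const[OF flim] by blast
    have ine: "L t q e \<le> - d (u,y) t * (e \<bullet> (Pu t *v e))"
      using ineq[OF t _ q, of e] Hz unfolding L_def Pu_def DP_def Am_def Hm_def by simp
    have "e \<noteq> 0" using e by auto
    then have pos: "e \<bullet> (Pu t *v e) > 0" using P_spd[OF uy t] unfolding sym_pos_def_mat_def Pu_def by blast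
    have "R t e < d (u,y) t * (e \<bullet> (Pu t *v e))" unfolding R_def
      using dbar_lt[OF t] pos by simp
    then show False using l0 ine by linarith
  qed
  then obtain C where C: "C > 0" and HC: "\<And>t e q. t\<in>{a..b} \<Longrightarrow> norm e = 1 \<Longrightarrow> q\<in>Q(t-\<tau>) \<Longrightarrow>
      L t q e + R t e \<le> C * (norm (Hm t *v e))^2" by blast
  have scaleL: "L t q (c *\<^sub>R e) = c^2 * L t q e" for t q c e
    unfolding L_def by (simp add: matrix_vector_mult_scaleR power2_eq_square algebra_simps)
  have scaleR': "R t (c *\<^sub>R e) = c^2 * R t e" for t c e
    unfolding R_def by (simp add: matrix_vector_mult_scaleR power2_eq_square algebra_simps)
  have scaleN: "(norm (Hm t *v (c *\<^sub>R e)))^2 = c^2 * (norm (Hm t *v e))^2" for t c e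
    by (simp add: matrix_vector_mult_scaleR power_mult_distrib)
  have main: "L t q e \<le> C * (norm (Hm t *v e))^2 - R t e" if t: "t\<in>{a..b}" and q: "q\<in>Q(t-\<tau>)" for t q e
  proof (cases "e = 0")
    case True then show ?thesis unfolding L_def R_def by simp
  next
    case False
    define c where "c = norm e"
    define e1 where "e1 = inverse c *\<^sub>R e"
    have c: "c > 0" using False c_def by simp
    have ee: "e = c *\<^sub>R e1" unfolding e1_def using c by simp
    have n1: "norm e1 = 1" unfolding e1_def c_def using False by simp
    have "c^2 * (L t q e1 + R t e1) \<le> c^2 * (C * (norm (Hm t *v e1))^2)"
      by (intro mult_left_mono HC[OF t n1 q]) simp
    then show ?thesis unfolding ee scaleL scaleR' scaleN by (simp add: algebra_simps)
  qed
  show "\<exists>\<phi> :: (real \<Rightarrow> real^'p) \<times> (real \<Rightarrow> real^'k) \<Rightarrow> real \<Rightarrow> real.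
        (\<forall>uy'\<in>Om. C1_on a b (\<phi> uy') \<and> (\<forall>t\<in>{a..b}. \<phi> uy' t > 0)) \<and>
        strongly_causal Om t0 a b \<phi> \<and>
        (\<forall>t\<in>{a..b}. \<forall>e. \<forall>q\<in>Q (t - \<tau>).
          e \<bullet> (P (u, y) t *v (A (t - \<tau>) q (y (t - \<tau>)) (u (t - \<tau>)) *v e))
          + 1/2 * (e \<bullet> (vector_derivative (P (u, y)) (at t within {a..b}) *v e))
          \<le> \<phi> (u, y) t * (norm (H (t - \<tau>) (u (t - \<tau>)) *v e))^2
             - dbar (u, y) t * (e \<bullet> (P (u, y) t *v e)))"
  proof (intro exI[of _ "\<lambda>_ _. C"] conjI ballI allI)
    fix uy' assume "uy' \<in> Om" show "C1_on a b (\<lambda>_. C)" using C1_const ab by simp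
  next
    fix uy' t assume "uy' \<in> Om" "t \<in> {a..b}" show "C > 0" by (rule C)
  next
    show "strongly_causal Om t0 a b (\<lambda>_ _. C)" unfolding strongly_causal_def by simp
  next
    fix t e q assume "t \<in> {a..b}" "q \<in> Q (t - \<tau>)"
    from main[OF this, of e] show "e \<bullet> (P (u, y) t *v (A (t - \<tau>) q (y (t - \<tau>)) (u (t - \<tau>)) *v e))
          + 1/2 * (e \<bullet> (vector_derivative (P (u, y)) (at t within {a..b}) *v e))
          \<le> C * (norm (H (t - \<tau>) (u (t - \<tau>)) *v e))^2
             - dbar (u, y) t * (e \<bullet> (P (u, y) t *v e))"
      unfolding L_def R_def Pu_def DP_def Am_def Hm_def by simp
  qed
qed


end
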